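(* Let $\theta\in\mathbb{R}^n$, $\sigma^2>0$, and for $\alpha\ge 0$ let $Y_\alpha\sim N(\theta,(1+\alpha)\sigma^2 I_n)$. Let $f:\mathbb{R}^n\to\mathbb{R}$ be measurable such that, for some $\beta>0$ and integer $k\ge0$, $$\mathbb{E}\big[|f(Y_\beta)|\,\|Y_\beta-\theta\|_2^{2m}\big]<\infty,\qquad m=0,\dots,k.$$ Then the map $\alpha\mapsto\mathbb{E}[f(Y_\alpha)]$ has $k$ continuous derivatives on $[0,\beta)$. *)

theory Defs
  imports "HOL-Probability.Probability"
begin

definition iso_gauss_density :: "real^'n \<Rightarrow> real \<Rightarrow> real^'n \<Rightarrow> real" where
  "iso_gauss_density \<theta> s2 y =
     (2 * pi * s2) powr (- real CARD('n) / 2) * exp (- (norm (y - \<theta>))\<^sup>2 / (2 * s2))"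

definition iso_gauss :: "real^'n \<Rightarrow> real \<Rightarrow> (real^'n) measure" where
  "iso_gauss \<theta> s2 = density lborel (\<lambda>y. ennreal (iso_gauss_density \<theta> s2 y))"

end

theory Submission
  imports Defs
begin

lemma dct_within:
  fixes F :: "real \<Rightarrow> 'a \<Rightarrow> real" and M :: "'a measure"
  assumes meas: "\<And>t. F t \<in> borel_measurable M" and Lm: "L \<in> borel_measurable M"
    and g: "integrable M g"
    and bound: "\<And>t y. t \<in> S - {x} \<Longrightarrow> y \<in> space M \<Longrightarrow> \<bar>F t y\<bar> \<le> g y"
    and lim: "\<And>y. y \<in> space M \<Longrightarrow> ((\<lambda>t. F t y) \<longlongrightarrow> L y) (at x within S)"
  shows "((\<lambda>t. \<integral>y. F t y \<partial>M) \<longlongrightarrow> (\<integral>y. L y \<partial>M)) (at x within S)"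
proof (subst tendsto_at_iff_sequentially, intro allI impI)
  fix X :: "nat \<Rightarrow> real" assume X: "\<forall>i. X i \<in> S - {x}" "X \<longlonglongrightarrow> x"
  have fl: "filterlim X (at x within S) sequentially"
    using X by (auto simp: filterlim_at)
  show "((\<lambda>t. \<integral>y. F t y \<partial>M) \<circ> X) \<longlonglongrightarrow> (\<integral>y. L y \<partial>M)"
    unfolding comp_def
  proof (rule integral_dominated_convergence[where w=g])
    show "AE y in M. (\<lambda>i. F (X i) y) \<longlonglongrightarrow> L y"
      using lim fl by (auto intro!: AE_I2 filterlim_compose[OF lim fl])
    show "AE y in M. norm (F (X i) y) \<le> g y" for i
      using bound X by (auto intro!: AE_I2)
  qed (use meas Lm g in auto)
qed

lemma quot_bound:
  fixes h h' :: "real \<Rightarrow> real"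
  assumes "x \<noteq> t"
    and d: "\<And>z. min x t \<le> z \<Longrightarrow> z \<le> max x t \<Longrightarrow> (h has_real_derivative h' z) (at z) \<and> \<bar>h' z\<bar> \<le> M"
  shows "\<bar>(h t - h x) / (t - x)\<bar> \<le> M"
proof (cases "x < t")
  case True
  have hd: "(h has_real_derivative h' z) (at z)" if "x \<le> z" "z \<le> t" for z
    using d[of z] that True by (simp add: min_def max_def)
  obtain z where z: "x < z" "z < t" "h t - h x = (t - x) * h' z"
    using MVT2[OF True hd] by blast
  have "(h t - h x) / (t - x) = h' z" using True z(3) by simp
  moreover have "\<bar>h' z\<bar> \<le> M" using d[of z] z True by (simp add: min_def max_def)
  ultimately show ?thesis by simp
next
  case False
  then have tx: "t < x" using assms(1) by simp
  have hd: "(h has_real_derivative h' z) (at z)" if "t \<le> z" "z \<le> x" for z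
    using d[of z] that tx by (simp add: min_def max_def)
  obtain z where z: "t < z" "z < x" "h x - h t = (x - t) * h' z"
    using MVT2[OF tx hd] by blast
  have "h t - h x = (t - x) * h' z" using z(3) by (simp add: algebra_simps)
  then have "(h t - h x) / (t - x) = h' z" using tx by simp
  moreover have "\<bar>h' z\<bar> \<le> M" using d[of z] z tx by (simp add: min_def max_def)
  ultimately show ?thesis by simp
qed

definition step :: "real \<Rightarrow> real \<Rightarrow> real \<times> nat \<times> nat \<Rightarrow> (real \<times> nat \<times> nat) list" where
  "step n s p = (case p of (\<kappa>, b, c) \<Rightarrow>
     [(-\<kappa> * (n/2 + real c) * s, b, Suc c), (\<kappa> * s / 2, Suc b, Suc (Suc c))])"

fun LL :: "real \<Rightarrow> real \<Rightarrow> nat \<Rightarrow> (real \<times> nat \<times> nat) list" where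
  "LL n s 0 = [((2*pi) powr (-n/2), 0, 0)]"
| "LL n s (Suc j) = concat (map (step n s) (LL n s j))"

lemma LL_b: "p \<in> set (LL n s j) \<Longrightarrow> fst (snd p) \<le> j"
proof (induction j arbitrary: p)
  case 0 then show ?case by simp
next
  case (Suc j)
  then obtain q where q: "q \<in> set (LL n s j)" "p \<in> set (step n s q)" by auto
  then show ?case using Suc.IH[OF q(1)] by (cases q) (auto simp: step_def)
qed

lemma abs_aux1: assumes N: "(n::real) \<ge> 0" and s2: "s > (0::real)"
  shows "\<bar>-(n/2 + real c) * s * E\<bar> = (n/2 + real c) * s * \<bar>E\<bar>"
  unfolding abs_mult abs_minus_cancel using N s2 by simp
lemma abs_aux2: assumes s2: "s > (0::real)"
  shows "\<bar>s/2 * E\<bar> = s/2 * \<bar>E\<bar>"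
  unfolding abs_mult using s2 by simp

locale GS =
  fixes \<theta> :: "real^'n" and \<sigma>2 \<beta> :: real and k :: nat and f :: "real^'n \<Rightarrow> real"
  assumes s2: "\<sigma>2 > 0" and bpos: "\<beta> > 0"
    and fm[measurable]: "f \<in> borel_measurable lborel"
    and hyp: "\<And>m. m \<le> k \<Longrightarrow>
           (\<integral>\<^sup>+ y. ennreal (\<bar>f y\<bar> * (norm (y - \<theta>)) ^ (2 * m)) \<partial>iso_gauss \<theta> ((1 + \<beta>) * \<sigma>2)) < \<infinity>"
begin


definition EE :: "nat \<Rightarrow> nat \<Rightarrow> real \<Rightarrow> real^'n \<Rightarrow> real" where
  "EE b c a y = f y * norm (y - \<theta>) ^ (2*b) * ((1+a)*\<sigma>2) powr (-(real CARD('n)/2 + real c))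
      * exp (- (norm (y - \<theta>))\<^sup>2 / (2*((1+a)*\<sigma>2)))"

definition GG :: "nat \<Rightarrow> real^'n \<Rightarrow> real" where
  "GG b y = \<bar>f y\<bar> * norm (y - \<theta>) ^ (2*b) * exp (- (norm (y - \<theta>))\<^sup>2 / (2*((1+\<beta>)*\<sigma>2)))"

lemma EE_meas[measurable]: "EE b c a \<in> borel_measurable lborel"
  unfolding EE_def by measurable

lemma GG_meas[measurable]: "GG b \<in> borel_measurable lborel"
  unfolding GG_def by measurable

lemma GG_int: assumes "b \<le> k" shows "integrable lborel (GG b)"
proof -
  define sb where "sb = (1+\<beta>)*\<sigma>2"
  have sb: "sb > 0" using s2 bpos by (simp add: sb_def)
  define C where "C = (2 * pi * sb) powr (- real CARD('n) / 2)"
  have C: "C > 0" using sb by (simp add: C_def)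
  have "(\<integral>\<^sup>+ y. ennreal (iso_gauss_density \<theta> sb y) * ennreal (\<bar>f y\<bar> * (norm (y - \<theta>)) ^ (2 * b)) \<partial>lborel) < \<infinity>"
    using hyp[OF assms] unfolding iso_gauss_def sb_def
    by (subst (asm) nn_integral_density) (auto simp: iso_gauss_density_def)
  also have "(\<integral>\<^sup>+ y. ennreal (iso_gauss_density \<theta> sb y) * ennreal (\<bar>f y\<bar> * (norm (y - \<theta>)) ^ (2 * b)) \<partial>lborel)
     = (\<integral>\<^sup>+ y. ennreal (C * GG b y) \<partial>lborel)"
    by (intro nn_integral_cong) (auto simp: iso_gauss_density_def GG_def C_def sb_def ennreal_mult'[symmetric] mult_ac)
  finally have "integrable lborel (\<lambda>y. C * GG b y)"
    by (intro integrableI_nonneg) (auto simp: GG_def intro!: AE_I2 mult_nonneg_nonneg less_imp_le[OF C])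
  then have "integrable lborel (\<lambda>y. inverse C * (C * GG b y))" by (rule integrable_mult_right)
  then show ?thesis using C by simp
qed

lemma EE_bound: assumes "0 \<le> a" "a \<le> \<beta>"
  shows "\<bar>EE b c a y\<bar> \<le> \<sigma>2 powr (-(real CARD('n)/2 + real c)) * GG b y"
proof -
  have N: "real CARD('n) \<ge> 0" by simp
  have s: "\<sigma>2 \<le> (1+a)*\<sigma>2" "(1+a)*\<sigma>2 \<le> (1+\<beta>)*\<sigma>2" "(1+a)*\<sigma>2 > 0"
    using assms s2 by (auto simp: mult_right_mono)
  have p: "((1+a)*\<sigma>2) powr (-(real CARD('n)/2 + real c)) \<le> \<sigma>2 powr (-(real CARD('n)/2 + real c))"
    using s s2 N by (intro powr_mono2') auto
  have e: "exp (- (norm (y - \<theta>))\<^sup>2 / (2*((1+a)*\<sigma>2))) \<le> exp (- (norm (y - \<theta>))\<^sup>2 / (2*((1+\<beta>)*\<sigma>2)))"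
    using s s2 bpos by (auto intro!: divide_left_mono mult_pos_pos)
  have "\<bar>EE b c a y\<bar> = (\<bar>f y\<bar> * norm (y - \<theta>) ^ (2*b)) * (((1+a)*\<sigma>2) powr (-(real CARD('n)/2 + real c))
      * exp (- (norm (y - \<theta>))\<^sup>2 / (2*((1+a)*\<sigma>2))))"
    by (simp add: EE_def abs_mult)
  also have "\<dots> \<le> (\<bar>f y\<bar> * norm (y - \<theta>) ^ (2*b)) * (\<sigma>2 powr (-(real CARD('n)/2 + real c))
      * exp (- (norm (y - \<theta>))\<^sup>2 / (2*((1+\<beta>)*\<sigma>2))))"
    by (intro mult_left_mono mult_mono p e) auto
  finally show ?thesis by (simp add: GG_def mult_ac)
qed

lemma EE_deriv: assumes "a > -1"
  shows "((\<lambda>a. EE b c a y) has_real_derivative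
     (-(real CARD('n)/2 + real c)*\<sigma>2 * EE b (Suc c) a y + \<sigma>2/2 * EE (Suc b) (Suc (Suc c)) a y)) (at a)"
proof -
  define v where "v = (1+a)*\<sigma>2"
  have v: "v > 0" using assms s2 by (simp add: v_def)
  define q where "q = -(real CARD('n)/2 + real c)"
  define r where "r = norm (y - \<theta>)"
  have d1: "((\<lambda>a. ((1+a)*\<sigma>2) powr q) has_real_derivative q * v powr (q-1) * \<sigma>2) (at a)"
    using v unfolding v_def by (auto intro!: derivative_eq_intros)
  have d2: "((\<lambda>a. exp (- r\<^sup>2 / (2*((1+a)*\<sigma>2)))) has_real_derivative
      (exp (- r\<^sup>2 / (2 * v)) * (r\<^sup>2 * \<sigma>2 / (2 * v\<^sup>2)))) (at a)"
    unfolding v_def apply (rule derivative_eq_intros refl)+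
    using s2 assms apply auto
    apply (simp add: power2_eq_square power_mult_distrib)
    done
  have d: "((\<lambda>a. f y * r ^ (2*b) * (((1+a)*\<sigma>2) powr q * exp (- r\<^sup>2 / (2*((1+a)*\<sigma>2))))) has_real_derivative
      (f y * r ^ (2*b) * (q * v powr (q-1) * \<sigma>2 * exp (- r\<^sup>2 / (2 * v)) + v powr q * (exp (- r\<^sup>2 / (2 * v)) * (r\<^sup>2 * \<sigma>2 / (2 * v\<^sup>2)))))) (at a)"
    apply (rule DERIV_cong[OF DERIV_cmult[OF DERIV_mult[OF d1 d2]]])
    by (simp add: v_def algebra_simps)
  have e1: "v powr (q - 1) = v powr q / v" using v by (simp add: powr_diff)
  have e2: "v powr (-(real CARD('n)/2 + real (Suc c))) = v powr q / v"
  proof -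
    have "v powr (-(real CARD('n)/2 + real (Suc c))) = v powr (q - 1)" unfolding q_def by (intro arg_cong[where f="\<lambda>x. v powr x"]) simp
    then show ?thesis using e1 by simp
  qed
  have e3: "v powr (-(real CARD('n)/2 + real (Suc (Suc c)))) = v powr q / v\<^sup>2"
  proof -
    have "v powr (-(real CARD('n)/2 + real (Suc (Suc c)))) = v powr (q - 2)" unfolding q_def by (intro arg_cong[where f="\<lambda>x. v powr x"]) simp
    also have "\<dots> = v powr q / v powr 2" using v by (simp add: powr_diff)
    also have "\<dots> = v powr q / v\<^sup>2" using v by (simp add: powr_numeral)
    finally show ?thesis .
  qed
  show ?thesis
    using d unfolding EE_def r_def[symmetric] q_def[symmetric] v_def[symmetric]
    apply (simp only: mult.assoc[symmetric] e1 e2 e3)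
    apply (erule DERIV_cong)
    using v by (simp add: field_simps power2_eq_square)
qed

definition TT :: "nat \<Rightarrow> nat \<Rightarrow> real \<Rightarrow> real" where
  "TT b c a = (\<integral>y. EE b c a y \<partial>lborel)"



lemma EE_int: assumes "b \<le> k" "0 \<le> a" "a \<le> \<beta>" shows "integrable lborel (EE b c a)"
proof (rule Bochner_Integration.integrable_bound)
  show "integrable lborel (\<lambda>y. (\<sigma>2 powr (-(real CARD('n)/2 + real c))) * GG b y)" by (rule integrable_mult_right[OF GG_int[OF assms(1)]])
  show "AE y in lborel. norm (EE b c a y) \<le> norm ((\<sigma>2 powr (-(real CARD('n)/2 + real c))) * GG b y)"
  proof (intro AE_I2)
    fix y
    have "0 \<le> GG b y" unfolding GG_def by simp
    then have "norm ((\<sigma>2 powr (-(real CARD('n)/2 + real c))) * GG b y) = (\<sigma>2 powr (-(real CARD('n)/2 + real c))) * GG b y"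
      by simp
    then show "norm (EE b c a y) \<le> norm ((\<sigma>2 powr (-(real CARD('n)/2 + real c))) * GG b y)"
      using EE_bound[OF assms(2,3), of b c y] by simp
  qed
  show "EE b c a \<in> borel_measurable lborel" by (rule EE_meas)
qed

lemma TT_cont: assumes "b \<le> k" shows "continuous_on {0..<\<beta>} (TT b c)"
  unfolding continuous_on_def
proof
  fix x assume x: "x \<in> {0..<\<beta>}"
  show "(TT b c \<longlongrightarrow> TT b c x) (at x within {0..<\<beta>})"
    unfolding TT_def
  proof (rule dct_within[where g="\<lambda>y. (\<sigma>2 powr (-(real CARD('n)/2 + real c))) * GG b y"])
    show "integrable lborel (\<lambda>y. (\<sigma>2 powr (-(real CARD('n)/2 + real c))) * GG b y)" by (rule integrable_mult_right[OF GG_int[OF assms(1)]])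
    show "\<bar>EE b c t y\<bar> \<le> (\<sigma>2 powr (-(real CARD('n)/2 + real c))) * GG b y" if "t \<in> {0..<\<beta>} - {x}" for t y
      using EE_bound[of t] that by simp
    show "((\<lambda>t. EE b c t y) \<longlongrightarrow> EE b c x y) (at x within {0..<\<beta>})" for y
    proof -
      have "isCont (\<lambda>t. EE b c t y) x" by (rule DERIV_isCont[OF EE_deriv]) (use x in auto)
      then have "((\<lambda>t. EE b c t y) \<longlongrightarrow> EE b c x y) (at x)" unfolding isCont_def .
      then show ?thesis by (rule tendsto_within_subset[OF _ subset_UNIV])
    qed
    show "EE b c t \<in> borel_measurable lborel" for t by (rule EE_meas)
    show "EE b c x \<in> borel_measurable lborel" by (rule EE_meas)
  qed
qed

lemma TT_deriv: assumes "Suc b \<le> k" and x: "x \<in> {0..<\<beta>}"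
  shows "(TT b c has_real_derivative
     (-(real CARD('n)/2 + real c)*\<sigma>2 * TT b (Suc c) x + \<sigma>2/2 * TT (Suc b) (Suc (Suc c)) x)) (at x within {0..<\<beta>})"
proof -
  let ?S = "{0..<\<beta>}"
  define L where "L y = -(real CARD('n)/2 + real c)*\<sigma>2 * EE b (Suc c) x y + \<sigma>2/2 * EE (Suc b) (Suc (Suc c)) x y" for y
  define B where "B y = (real CARD('n)/2 + real c)*\<sigma>2 * ((\<sigma>2 powr (-(real CARD('n)/2 + real (Suc c)))) * GG b y) + \<sigma>2/2 * ((\<sigma>2 powr (-(real CARD('n)/2 + real (Suc (Suc c))))) * GG (Suc b) y)" for y
  have N: "real CARD('n) \<ge> 0" by simp
  have bk: "b \<le> k" using assms by simp
  have intL: "integrable lborel (EE b (Suc c) x)" "integrable lborel (EE (Suc b) (Suc (Suc c)) x)"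
    using x bk assms(1) by (auto intro!: EE_int)
  have lim: "((\<lambda>t. \<integral>y. (EE b c t y - EE b c x y) / (t - x) \<partial>lborel) \<longlongrightarrow> (\<integral>y. L y \<partial>lborel)) (at x within ?S)"
  proof (rule dct_within[where g=B])
    show "integrable lborel B" unfolding B_def
      by (intro Bochner_Integration.integrable_add integrable_mult_right GG_int bk assms(1))
    show "L \<in> borel_measurable lborel" unfolding L_def by measurable
    show "\<bar>(EE b c t y - EE b c x y) / (t - x)\<bar> \<le> B y" if t: "t \<in> ?S - {x}" for t y
    proof (rule quot_bound)
      show "x \<noteq> t" using t by auto
      fix z assume z: "min x t \<le> z" "z \<le> max x t"
      then have z': "0 \<le> z" "z \<le> \<beta>" using x t by (auto simp: min_def max_def split: if_splits)
      show "((\<lambda>a. EE b c a y) has_real_derivative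
         (-(real CARD('n)/2 + real c)*\<sigma>2 * EE b (Suc c) z y + \<sigma>2/2 * EE (Suc b) (Suc (Suc c)) z y)) (at z) \<and>
         \<bar>-(real CARD('n)/2 + real c)*\<sigma>2 * EE b (Suc c) z y + \<sigma>2/2 * EE (Suc b) (Suc (Suc c)) z y\<bar> \<le> B y"
      proof
        show "((\<lambda>a. EE b c a y) has_real_derivative
         (-(real CARD('n)/2 + real c)*\<sigma>2 * EE b (Suc c) z y + \<sigma>2/2 * EE (Suc b) (Suc (Suc c)) z y)) (at z)"
          using z' by (intro EE_deriv) auto
        have "\<bar>-(real CARD('n)/2 + real c)*\<sigma>2 * EE b (Suc c) z y + \<sigma>2/2 * EE (Suc b) (Suc (Suc c)) z y\<bar>
           \<le> (real CARD('n)/2 + real c)*\<sigma>2 * \<bar>EE b (Suc c) z y\<bar> + \<sigma>2/2 * \<bar>EE (Suc b) (Suc (Suc c)) z y\<bar>"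
        proof -
          have a1: "\<bar>-(real CARD('n)/2 + real c)*\<sigma>2 * EE b (Suc c) z y\<bar> = (real CARD('n)/2 + real c)*\<sigma>2 * \<bar>EE b (Suc c) z y\<bar>"
            by (rule abs_aux1[OF N s2])
          have a2: "\<bar>\<sigma>2/2 * EE (Suc b) (Suc (Suc c)) z y\<bar> = \<sigma>2/2 * \<bar>EE (Suc b) (Suc (Suc c)) z y\<bar>"
            by (rule abs_aux2[OF s2])
          show ?thesis using abs_triangle_ineq[of "-(real CARD('n)/2 + real c)*\<sigma>2 * EE b (Suc c) z y" "\<sigma>2/2 * EE (Suc b) (Suc (Suc c)) z y"]
            unfolding a1 a2 .
        qed
        also have "\<dots> \<le> B y" unfolding B_def
        proof (rule add_mono)
          have "0 \<le> (real CARD('n)/2 + real c)*\<sigma>2" using s2 by simp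
          then show "(real CARD('n)/2 + real c)*\<sigma>2 * \<bar>EE b (Suc c) z y\<bar> \<le> (real CARD('n)/2 + real c)*\<sigma>2 * ((\<sigma>2 powr (-(real CARD('n)/2 + real (Suc c)))) * GG b y)"
            by (rule mult_left_mono[OF EE_bound[OF z']])
          have "0 \<le> \<sigma>2/2" using s2 by simp
          then show "\<sigma>2/2 * \<bar>EE (Suc b) (Suc (Suc c)) z y\<bar> \<le> \<sigma>2/2 * ((\<sigma>2 powr (-(real CARD('n)/2 + real (Suc (Suc c))))) * GG (Suc b) y)"
            by (rule mult_left_mono[OF EE_bound[OF z']])
        qed
        finally show "\<bar>-(real CARD('n)/2 + real c)*\<sigma>2 * EE b (Suc c) z y + \<sigma>2/2 * EE (Suc b) (Suc (Suc c)) z y\<bar> \<le> B y" .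
      qed
    qed
    show "((\<lambda>t. (EE b c t y - EE b c x y) / (t - x)) \<longlongrightarrow> L y) (at x within ?S)" for y
    proof -
      have "((\<lambda>a. EE b c a y) has_real_derivative L y) (at x within ?S)"
        unfolding L_def by (rule has_field_derivative_at_within[OF EE_deriv]) (use x in auto)
      then show ?thesis by (simp add: has_field_derivative_iff)
    qed
    show "(\<lambda>y. (EE b c t y - EE b c x y) / (t - x)) \<in> borel_measurable lborel" for t by measurable
  qed
  have "(\<integral>y. L y \<partial>lborel) = (\<integral>y. -(real CARD('n)/2 + real c)*\<sigma>2 * EE b (Suc c) x y \<partial>lborel) + (\<integral>y. \<sigma>2/2 * EE (Suc b) (Suc (Suc c)) x y \<partial>lborel)"
    unfolding L_def by (rule Bochner_Integration.integral_add; rule integrable_mult_right; rule intL)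
  then have IL: "(\<integral>y. L y \<partial>lborel) = -(real CARD('n)/2 + real c)*\<sigma>2 * TT b (Suc c) x + \<sigma>2/2 * TT (Suc b) (Suc (Suc c)) x"
    by (simp only: integral_mult_right_zero TT_def)
  have ev: "\<forall>\<^sub>F t in at x within ?S. (\<integral>y. (EE b c t y - EE b c x y) / (t - x) \<partial>lborel) = (TT b c t - TT b c x) / (t - x)"
    unfolding eventually_at_filter
  proof (intro always_eventually allI impI)
    fix t assume "t \<noteq> x" "t \<in> ?S"
    then have "integrable lborel (EE b c t)" "integrable lborel (EE b c x)" using x bk by (auto intro!: EE_int)
    then show "(\<integral>y. (EE b c t y - EE b c x y) / (t - x) \<partial>lborel) = (TT b c t - TT b c x) / (t - x)"
      unfolding TT_def by simp
  qed
  show ?thesis unfolding has_field_derivative_iff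
    using Lim_transform_eventually[OF lim ev] unfolding IL .
qed


definition DD :: "nat \<Rightarrow> real \<Rightarrow> real" where
  "DD j a = sum_list (map (\<lambda>(\<kappa>, b, c). \<kappa> * TT b c a) (LL (real CARD('n)) \<sigma>2 j))"

lemma deriv_list:
  assumes "\<forall>p\<in>set xs. Suc (fst (snd p)) \<le> k" and x: "x \<in> {0..<\<beta>}"
  shows "((\<lambda>a. sum_list (map (\<lambda>(\<kappa>, b, c). \<kappa> * TT b c a) xs)) has_real_derivative
     sum_list (map (\<lambda>(\<kappa>, b, c). \<kappa> * TT b c x) (concat (map (step (real CARD('n)) \<sigma>2) xs))))
     (at x within {0..<\<beta>})"
  using assms(1)
proof (induction xs)
  case Nil then show ?case by simp
next
  case (Cons p xs)
  obtain \<kappa> b c where p: "p = (\<kappa>, b, c)" by (cases p)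
  have bk: "Suc b \<le> k" using Cons.prems p by auto
  have "((\<lambda>a. \<kappa> * TT b c a + sum_list (map (\<lambda>(\<kappa>, b, c). \<kappa> * TT b c a) xs)) has_real_derivative
     \<kappa> * (-(real CARD('n)/2 + real c)*\<sigma>2 * TT b (Suc c) x + \<sigma>2/2 * TT (Suc b) (Suc (Suc c)) x) +
     sum_list (map (\<lambda>(\<kappa>, b, c). \<kappa> * TT b c x) (concat (map (step (real CARD('n)) \<sigma>2) xs))))
     (at x within {0..<\<beta>})"
  proof (rule DERIV_add[OF DERIV_cmult[OF TT_deriv[OF bk x]]])
    show "((\<lambda>a. sum_list (map (\<lambda>(\<kappa>, b, c). \<kappa> * TT b c a) xs)) has_real_derivative
     sum_list (map (\<lambda>(\<kappa>, b, c). \<kappa> * TT b c x) (concat (map (step (real CARD('n)) \<sigma>2) xs))))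
     (at x within {0..<\<beta>})"
      using Cons.IH Cons.prems by simp
  qed
  moreover have "sum_list (map (\<lambda>(\<kappa>, b, c). \<kappa> * TT b c x) (concat (map (step (real CARD('n)) \<sigma>2) (p # xs)))) =
     \<kappa> * (-(real CARD('n)/2 + real c)*\<sigma>2 * TT b (Suc c) x + \<sigma>2/2 * TT (Suc b) (Suc (Suc c)) x) +
     sum_list (map (\<lambda>(\<kappa>, b, c). \<kappa> * TT b c x) (concat (map (step (real CARD('n)) \<sigma>2) xs)))"
    by (simp add: p step_def algebra_simps)
  ultimately show ?case by (simp add: p)
qed

lemma cont_list:
  assumes "\<forall>p\<in>set xs. fst (snd p) \<le> k"
  shows "continuous_on {0..<\<beta>} (\<lambda>a. sum_list (map (\<lambda>(\<kappa>, b, c). \<kappa> * TT b c a) xs))"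
  using assms
proof (induction xs)
  case Nil then show ?case by simp
next
  case (Cons p xs)
  obtain \<kappa> b c where p: "p = (\<kappa>, b, c)" by (cases p)
  have bk: "b \<le> k" using Cons.prems p by auto
  have ih: "continuous_on {0..<\<beta>} (\<lambda>a. sum_list (map (\<lambda>(\<kappa>, b, c). \<kappa> * TT b c a) xs))"
    using Cons.IH Cons.prems by simp
  have "continuous_on {0..<\<beta>} (\<lambda>a. \<kappa> * TT b c a + sum_list (map (\<lambda>(\<kappa>, b, c). \<kappa> * TT b c a) xs))"
    by (rule continuous_on_add[OF continuous_on_mult[OF continuous_on_const TT_cont[OF bk]] ih])
  then show ?case by (simp add: p)
qed

lemma DD0: assumes "0 \<le> a"
  shows "DD 0 a = (\<integral>y. f y \<partial>iso_gauss \<theta> ((1 + a) * \<sigma>2))"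
proof -
  have s: "(1+a)*\<sigma>2 > 0" using assms s2 by simp
  have "(\<integral>y. f y \<partial>iso_gauss \<theta> ((1 + a) * \<sigma>2)) =
      (\<integral>y. iso_gauss_density \<theta> ((1 + a) * \<sigma>2) y *\<^sub>R f y \<partial>lborel)"
    unfolding iso_gauss_def
    by (rule integral_density) (auto simp: iso_gauss_density_def)
  also have "\<dots> = (\<integral>y. (2*pi) powr (-real CARD('n)/2) * EE 0 0 a y \<partial>lborel)"
  proof (intro Bochner_Integration.integral_cong refl)
    fix y
    have pm: "(2 * pi * ((1+a)*\<sigma>2)) powr (- real CARD('n) / 2) = (2*pi) powr (- real CARD('n) / 2) * ((1+a)*\<sigma>2) powr (-(real CARD('n)/2 + real (0::nat)))"
      using powr_mult[of "2*pi" "(1+a)*\<sigma>2" "- real CARD('n) / 2"] s by simp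
    show "iso_gauss_density \<theta> ((1 + a) * \<sigma>2) y *\<^sub>R f y = (2*pi) powr (-real CARD('n)/2) * EE 0 0 a y"
      by (simp only: iso_gauss_density_def EE_def pm) (simp add: mult_ac)
  qed
  also have "\<dots> = DD 0 a" by (simp add: DD_def TT_def)
  finally show ?thesis ..
qed

end

theorem mainTheorem5:
  fixes \<theta> :: "real^'n" and \<sigma>2 \<beta> :: real and k :: nat and f :: "real^'n \<Rightarrow> real"
  assumes "\<sigma>2 > 0" and "\<beta> > 0"
    and "f \<in> borel_measurable lborel"
    and "\<And>m. m \<le> k \<Longrightarrow>
           (\<integral>\<^sup>+ y. ennreal (\<bar>f y\<bar> * (norm (y - \<theta>)) ^ (2 * m)) \<partial>iso_gauss \<theta> ((1 + \<beta>) * \<sigma>2)) < \<infinity>"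
  shows "\<exists>D :: nat \<Rightarrow> real \<Rightarrow> real.
           (\<forall>\<alpha>\<in>{0..<\<beta>}. D 0 \<alpha> = (\<integral>y. f y \<partial>iso_gauss \<theta> ((1 + \<alpha>) * \<sigma>2))) \<and>
           (\<forall>j<k. \<forall>\<alpha>\<in>{0..<\<beta>}. (D j has_real_derivative D (Suc j) \<alpha>) (at \<alpha> within {0..<\<beta>})) \<and>
           (\<forall>j\<le>k. continuous_on {0..<\<beta>} (D j))"
proof -
  interpret GS \<theta> \<sigma>2 \<beta> k f
    by (rule GS.intro) (use assms in auto)
  show ?thesis
  proof (intro exI[of _ DD] conjI ballI allI impI)
    fix \<alpha> assume "\<alpha> \<in> {0..<\<beta>}"
    then show "DD 0 \<alpha> = (\<integral>y. f y \<partial>iso_gauss \<theta> ((1 + \<alpha>) * \<sigma>2))" by (intro DD0) simp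
  next
    fix j \<alpha> assume j: "j < k" and a: "\<alpha> \<in> {0..<\<beta>}"
    have "\<forall>p\<in>set (LL (real CARD('n)) \<sigma>2 j). Suc (fst (snd p)) \<le> k"
      using LL_b j by fastforce
    from deriv_list[OF this a]
    show "(DD j has_real_derivative DD (Suc j) \<alpha>) (at \<alpha> within {0..<\<beta>})"
      unfolding DD_def[abs_def] by simp
  next
    fix j assume j: "j \<le> k"
    have "\<forall>p\<in>set (LL (real CARD('n)) \<sigma>2 j). fst (snd p) \<le> k"
      using LL_b j by fastforce
    from cont_list[OF this]
    show "continuous_on {0..<\<beta>} (DD j)"
      unfolding DD_def[abs_def] by simp
  qed
qed

end
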